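(* Let $\Gamma\subset\mathbb{Z}^2$ be a finite convex domain. Let $\mathcal{H}_G^\Gamma=\{H\in\mathcal{H}_\mathbb{Q}^\Gamma : (\Delta_\Gamma H)|_{\partial\Gamma}\in\mathbb{Z}^{\partial\Gamma}\}/\mathcal{H}_\mathbb{Z}^\Gamma$. Then the map $H\mapsto[-\Delta_\Gamma H]$ is a well-defined group isomorphism $\mathcal{H}_G^\Gamma\cong G_\Gamma$. Equivalently, the sequence $$0\to G_\Gamma\to \mathcal{H}_\mathbb{Q}^\Gamma/\mathcal{H}_\mathbb{Z}^\Gamma\to(\mathbb{Q}/\mathbb{Z})^{\partial\Gamma}\to 0,$$ where the first map is the inverse of this isomorphism followed by the inclusion, and the second map sends $H$ to $(\Delta_\Gamma H)|_{\partial\Gamma}$ modulo $\mathbb{Z}^{\partial\Gamma}$, is exact.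
   Context: A set $\Gamma\subseteq\mathbb{Z}^2$ is a convex domain if $\Gamma=P\cap\mathbb{Z}^2$ for some convex open set $P\subseteq\mathbb{R}^2$. For finite $\Gamma$, consider the graph with vertices $\Gamma\cup\{s\}$ obtained from the nearest-neighbor graph $\mathbb{Z}^2$ by identifying all vertices outside $\Gamma$ to a sink $s$. The reduced Laplacian is $(\Delta_\Gamma f)(v)=\sum_{w\in\Gamma,\,w\sim v}f(w)-4f(v)$ for $f:\Gamma\to R$, $v\in\Gamma$. The sandpile group is $G_\Gamma=\mathbb{Z}^\Gamma/\Delta_\Gamma(\mathbb{Z}^\Gamma)$, with $[\cdot]$ the projection. The boundary $\partial\Gamma$ is the set of vertices of $\Gamma$ adjacent (in $\mathbb{Z}^2$) to some vertex outside $\Gamma$, and $\Gamma\setminus\partial\Gamma$ is the interior. For $R\in\{\mathbb{Z},\mathbb{Q},\mathbb{R}\}$, $\mathcal{H}_R^\Gamma$ is the module of functions $H:\Gamma\to R$ that are harmonic on $\Gamma$, i.e. $(\Delta_\Gamma H)(v)=0$ for all $v\in\Gamma\setminus\partial\Gamma$. *)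

theory Defs
  imports "HOL-Analysis.Analysis" "HOL-Algebra.Algebra"
begin

type_synonym vtx = "int \<times> int"

definition adj :: "vtx \<Rightarrow> vtx \<Rightarrow> bool" where
  "adj v w \<longleftrightarrow> \<bar>fst v - fst w\<bar> + \<bar>snd v - snd w\<bar> = 1"

definition convex_domain :: "vtx set \<Rightarrow> bool" where
  "convex_domain \<Gamma> \<longleftrightarrow> (\<exists>P :: (real \<times> real) set. convex P \<and> open P \<and>
      \<Gamma> = {v. (real_of_int (fst v), real_of_int (snd v)) \<in> P})"

definition boundary :: "vtx set \<Rightarrow> vtx set" where
  "boundary \<Gamma> = {v \<in> \<Gamma>. \<exists>w. adj v w \<and> w \<notin> \<Gamma>}"

text \<open>Functions on Gamma are represented as functions on Z^2 vanishing outside Gamma.\<close>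
definition funs_on :: "vtx set \<Rightarrow> (vtx \<Rightarrow> rat) set" where
  "funs_on \<Gamma> = {f. \<forall>v. v \<notin> \<Gamma> \<longrightarrow> f v = 0}"

definition int_funs_on :: "vtx set \<Rightarrow> (vtx \<Rightarrow> rat) set" where
  "int_funs_on \<Gamma> = {f \<in> funs_on \<Gamma>. \<forall>v. f v \<in> \<int>}"

definition lap :: "vtx set \<Rightarrow> (vtx \<Rightarrow> rat) \<Rightarrow> vtx \<Rightarrow> rat" where
  "lap \<Gamma> f v = (if v \<in> \<Gamma> then (\<Sum>w\<in>{w\<in>\<Gamma>. adj v w}. f w) - 4 * f v else 0)"

definition harmonic_Q :: "vtx set \<Rightarrow> (vtx \<Rightarrow> rat) set" where
  "harmonic_Q \<Gamma> = {H \<in> funs_on \<Gamma>. \<forall>v \<in> \<Gamma> - boundary \<Gamma>. lap \<Gamma> H v = 0}"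

definition harmonic_Z :: "vtx set \<Rightarrow> (vtx \<Rightarrow> rat) set" where
  "harmonic_Z \<Gamma> = harmonic_Q \<Gamma> \<inter> int_funs_on \<Gamma>"

definition harmonic_G_carrier :: "vtx set \<Rightarrow> (vtx \<Rightarrow> rat) set" where
  "harmonic_G_carrier \<Gamma> = {H \<in> harmonic_Q \<Gamma>. \<forall>v \<in> boundary \<Gamma>. lap \<Gamma> H v \<in> \<int>}"

definition fun_group :: "(vtx \<Rightarrow> rat) set \<Rightarrow> (vtx \<Rightarrow> rat) monoid" where
  "fun_group A = \<lparr>carrier = A, monoid.mult = (\<lambda>f g v. f v + g v), one = (\<lambda>v. 0)\<rparr>"

definition sandpile_group :: "vtx set \<Rightarrow> (vtx \<Rightarrow> rat) set monoid" where
  "sandpile_group \<Gamma> = fun_group (int_funs_on \<Gamma>) Mod (lap \<Gamma> ` int_funs_on \<Gamma>)"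

definition harmonic_G :: "vtx set \<Rightarrow> (vtx \<Rightarrow> rat) set monoid" where
  "harmonic_G \<Gamma> = fun_group (harmonic_G_carrier \<Gamma>) Mod harmonic_Z \<Gamma>"

end

theory Submission
  imports Defs "HOL-Library.Function_Algebras"
begin

definition nbs :: "vtx \<Rightarrow> vtx set" where
  "nbs v = {(fst v + 1, snd v), (fst v - 1, snd v), (fst v, snd v + 1), (fst v, snd v - 1)}"

lemma funs_onD: "f \<in> funs_on \<Gamma> \<Longrightarrow> v \<notin> \<Gamma> \<Longrightarrow> f v = 0"
  unfolding funs_on_def by blast

lemma int_funs_onD: "f \<in> int_funs_on \<Gamma> \<Longrightarrow> f v \<in> \<int>"
  unfolding int_funs_on_def by blast

lemma int_funs_onD2: "f \<in> int_funs_on \<Gamma> \<Longrightarrow> f \<in> funs_on \<Gamma>"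
  unfolding int_funs_on_def by blast

lemma adj_iff: "adj v w \<longleftrightarrow> w \<in> nbs v"
  by (cases v, cases w) (auto simp: adj_def nbs_def abs_if split: if_splits)

lemma lap_nb:
  assumes f: "f \<in> funs_on \<Gamma>" and v: "v \<in> \<Gamma>"
  shows "lap \<Gamma> f v = f (fst v + 1, snd v) + f (fst v - 1, snd v) + f (fst v, snd v + 1) + f (fst v, snd v - 1) - 4 * f v"
proof -
  have e: "{w\<in>\<Gamma>. adj v w} = \<Gamma> \<inter> nbs v" by (auto simp: adj_iff)
  have "(\<Sum>w\<in>\<Gamma> \<inter> nbs v. f w) = (\<Sum>w\<in>nbs v. f w)"
    by (rule sum.mono_neutral_left) (use f in \<open>auto simp: nbs_def funs_on_def\<close>)
  also have "\<dots> = f (fst v + 1, snd v) + f (fst v - 1, snd v) + f (fst v, snd v + 1) + f (fst v, snd v - 1)"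
    by (cases v) (simp add: nbs_def)
  finally show ?thesis using v by (simp add: lap_def e)
qed

lemma lap_add: "lap \<Gamma> (\<lambda>v. f v + g v) = (\<lambda>v. lap \<Gamma> f v + lap \<Gamma> g v)"
  by (auto simp: lap_def fun_eq_iff sum.distrib algebra_simps)

lemma lap_scale: "lap \<Gamma> (\<lambda>v. c * f v) = (\<lambda>v. c * lap \<Gamma> f v)"
  by (auto simp: lap_def fun_eq_iff sum_distrib_left algebra_simps)

lemma lap_neg: "lap \<Gamma> (\<lambda>v. - f v) = (\<lambda>v. - lap \<Gamma> f v)"
  by (auto simp: lap_def fun_eq_iff sum_negf algebra_simps)

lemma lap_out: "v \<notin> \<Gamma> \<Longrightarrow> lap \<Gamma> f v = 0"
  by (simp add: lap_def)

lemma lap_funs: "lap \<Gamma> f \<in> funs_on \<Gamma>"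
  by (simp add: funs_on_def lap_def)

lemma lap_int: assumes "f \<in> int_funs_on \<Gamma>" shows "lap \<Gamma> f v \<in> \<int>"
proof -
  have "\<And>w. f w \<in> \<int>" using int_funs_onD[OF assms] .
  then show ?thesis by (auto simp: lap_def intro!: Ints_sum Ints_diff Ints_mult)
qed

lemma lap_int_funs: "f \<in> int_funs_on \<Gamma> \<Longrightarrow> lap \<Gamma> f \<in> int_funs_on \<Gamma>"
  using lap_int lap_funs by (auto simp: int_funs_on_def)

lemma max_principle:
  assumes fin: "finite \<Gamma>" and f: "f \<in> funs_on \<Gamma>" and L: "\<forall>v\<in>\<Gamma>. lap \<Gamma> f v = 0"
  shows "f v \<le> 0"
proof (rule ccontr)
  assume "\<not> f v \<le> 0"
  hence pos: "f v > 0" by simp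
  have vG: "v \<in> \<Gamma>" using funs_onD[OF f, of v] pos by force
  define M where "M = Max (f ` \<Gamma>)"
  have Mge: "\<forall>w\<in>\<Gamma>. f w \<le> M" using fin by (auto simp: M_def)
  have Mpos: "M > 0" using Mge vG pos by force
  have le: "f w \<le> M" for w
    using Mge Mpos funs_onD[OF f, of w] by (cases "w \<in> \<Gamma>") auto
  define A where "A = {w\<in>\<Gamma>. f w = M}"
  have "M \<in> f ` \<Gamma>" unfolding M_def using fin vG by (intro Max_in) auto
  hence Ane: "A \<noteq> {}" by (auto simp: A_def)
  have Afin: "finite A" using fin by (auto simp: A_def)
  define m where "m = Max (fst ` A)"
  have "m \<in> fst ` A" unfolding m_def using Afin Ane by (intro Max_in) auto
  then obtain p where p: "p \<in> A" "fst p = m" by auto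
  have pmax: "\<forall>w\<in>A. fst w \<le> m" using Afin by (auto simp: m_def)
  have lt: "f (fst p + 1, snd p) < M"
  proof -
    have "f (fst p + 1, snd p) \<noteq> M"
    proof
      assume eq: "f (fst p + 1, snd p) = M"
      hence "(fst p + 1, snd p) \<in> \<Gamma>" using funs_onD[OF f, of "(fst p + 1, snd p)"] Mpos by force
      hence "(fst p + 1, snd p) \<in> A" using eq by (auto simp: A_def)
      thus False using pmax p by force
    qed
    thus ?thesis using le[of "(fst p + 1, snd p)"] by simp
  qed
  have pG: "p \<in> \<Gamma>" and fp: "f p = M" using p by (auto simp: A_def)
  have "lap \<Gamma> f p = 0" using L pG by auto
  moreover have "lap \<Gamma> f p < 0"
    using lap_nb[OF f pG] lt le[of "(fst p - 1, snd p)"] le[of "(fst p, snd p + 1)"]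
      le[of "(fst p, snd p - 1)"] fp by simp
  ultimately show False by simp
qed

lemma lap_inj0:
  assumes fin: "finite \<Gamma>" and f: "f \<in> funs_on \<Gamma>" and L: "\<forall>v\<in>\<Gamma>. lap \<Gamma> f v = 0"
  shows "f = (\<lambda>v. 0)"
proof
  fix v
  have "f v \<le> 0" using max_principle[OF fin f L] .
  moreover have "- f v \<le> 0"
    using max_principle[OF fin, of "\<lambda>v. - f v"] f L by (auto simp: funs_on_def lap_neg)
  ultimately show "f v = 0" by simp
qed

definition sc :: "rat \<Rightarrow> (vtx \<Rightarrow> rat) \<Rightarrow> (vtx \<Rightarrow> rat)" where "sc c f = (\<lambda>v. c * f v)"

lemma vs_sc: "vector_space sc"
  by unfold_locales (auto simp: sc_def fun_eq_iff algebra_simps)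

lemma lin_lap: "Vector_Spaces.linear sc sc (lap \<Gamma>)"
  unfolding Vector_Spaces.linear_iff using vs_sc
  by (auto simp: plus_fun_def sc_def lap_add lap_scale)

definition dlt :: "vtx \<Rightarrow> vtx \<Rightarrow> rat" where "dlt u = (\<lambda>w. if w = u then 1 else 0)"

lemma sum_fun_app: "(sum g A) v = (\<Sum>u\<in>A. g u v)"
  by (induction A rule: infinite_finite_induct) auto

lemma lap_diff: "lap \<Gamma> (\<lambda>v. f v - g v) = (\<lambda>v. lap \<Gamma> f v - lap \<Gamma> g v)"
  by (auto simp: lap_def fun_eq_iff sum_subtractf algebra_simps)

lemma lap_inj_on:
  assumes fin: "finite \<Gamma>"
  shows "inj_on (lap \<Gamma>) (funs_on \<Gamma>)"
proof (rule inj_onI)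
  fix x y assume x: "x \<in> funs_on \<Gamma>" and y: "y \<in> funs_on \<Gamma>" and e: "lap \<Gamma> x = lap \<Gamma> y"
  have d: "(\<lambda>v. x v - y v) \<in> funs_on \<Gamma>" using funs_onD[OF x] funs_onD[OF y]
    by (auto simp: funs_on_def)
  have "\<forall>v\<in>\<Gamma>. lap \<Gamma> (\<lambda>v. x v - y v) v = 0" by (simp add: lap_diff e)
  from lap_inj0[OF fin d this] show "x = y" by (auto simp: fun_eq_iff)
qed

lemma lap_surj:
  assumes fin: "finite \<Gamma>" and b: "b \<in> funs_on \<Gamma>"
  shows "\<exists>H \<in> funs_on \<Gamma>. lap \<Gamma> H = b"
proof -
  interpret V: vector_space sc by (rule vs_sc)
  interpret P: vector_space_pair sc sc by unfold_locales
  define E where "E = dlt ` \<Gamma>"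
  have Efin: "finite E" using fin by (simp add: E_def)
  have sub: "V.subspace (funs_on \<Gamma>)"
    unfolding V.subspace_def by (auto simp: funs_on_def sc_def plus_fun_def)
  have Efuns: "E \<subseteq> funs_on \<Gamma>" by (auto simp: E_def dlt_def funs_on_def)
  have spanE1: "V.span E \<subseteq> funs_on \<Gamma>" by (rule V.span_minimal[OF Efuns sub])
  have spanE2: "funs_on \<Gamma> \<subseteq> V.span E"
  proof
    fix f assume f: "f \<in> funs_on \<Gamma>"
    have "f = (\<Sum>u\<in>\<Gamma>. sc (f u) (dlt u))"
    proof
      fix v
      have "(\<Sum>u\<in>\<Gamma>. sc (f u) (dlt u)) v = (\<Sum>u\<in>\<Gamma>. f u * dlt u v)"
        by (simp add: sum_fun_app sc_def)
      also have "\<dots> = (if v \<in> \<Gamma> then f v else 0)"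
        by (simp add: dlt_def if_distrib[of "\<lambda>x. f _ * x"] sum.delta' fin cong: if_cong)
      also have "\<dots> = f v" using funs_onD[OF f] by auto
      finally show "f v = (\<Sum>u\<in>\<Gamma>. sc (f u) (dlt u)) v" by simp
    qed
    also have "\<dots> \<in> V.span E"
      by (intro V.span_sum V.span_scale V.span_base) (auto simp: E_def)
    finally show "f \<in> V.span E" .
  qed
  have injd: "inj_on dlt \<Gamma>" by (rule inj_onI) (auto simp: dlt_def fun_eq_iff split: if_splits)
  have indE: "V.independent E"
  proof -
    have "\<not> V.dependent E"
    proof
      assume "V.dependent E"
      then obtain u where u: "\<exists>v\<in>E. u v \<noteq> 0" "(\<Sum>v\<in>E. sc (u v) v) = 0"
        using V.dependent_finite[OF Efin] by blast
      from u(1) obtain p where p: "p \<in> \<Gamma>" "u (dlt p) \<noteq> 0" by (auto simp: E_def)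
      have "0 = (\<Sum>v\<in>E. sc (u v) v) p" using u(2) by simp
      also have "\<dots> = (\<Sum>q\<in>\<Gamma>. u (dlt q) * dlt q p)"
        by (simp add: sum_fun_app sc_def E_def sum.reindex[OF injd])
      also have "\<dots> = u (dlt p)"
        by (simp add: dlt_def if_distrib[of "\<lambda>x. _ * x"] sum.delta fin p cong: if_cong)
      finally show False using p by simp
    qed
    thus ?thesis by simp
  qed
  have injL: "inj_on (lap \<Gamma>) (funs_on \<Gamma>)" by (rule lap_inj_on[OF fin])
  define S where "S = lap \<Gamma> ` E"
  have indS: "V.independent S" unfolding S_def
    by (rule P.linear_independent_injective_image[OF lin_lap indE])
       (rule inj_on_subset[OF injL spanE1])
  have cardS: "card S = card E" unfolding S_def
    by (rule card_image) (rule inj_on_subset[OF injL Efuns])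
  have Ssub: "S \<subseteq> V.span E" using lap_funs spanE2 by (auto simp: S_def)
  have "b \<in> V.span S"
  proof (rule ccontr)
    assume nb: "b \<notin> V.span S"
    have "V.independent (insert b S)" by (rule V.independent_insertI[OF nb indS])
    moreover have "insert b S \<subseteq> V.span E" using Ssub spanE2 b by auto
    ultimately have "card (insert b S) \<le> card E"
      using V.independent_span_bound[OF Efin] by blast
    moreover have "b \<notin> S" using nb V.span_base by blast
    moreover have "finite S" using Efin by (simp add: S_def)
    ultimately show False using cardS by simp
  qed
  also have "V.span S = lap \<Gamma> ` V.span E" unfolding S_def
    by (rule P.linear_span_image[OF lin_lap])
  finally obtain H where "H \<in> V.span E" "b = lap \<Gamma> H" by auto
  thus ?thesis using spanE1 by auto
qed

lemma interior_nb:
  assumes "u \<in> \<Gamma> - boundary \<Gamma>"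
  shows "(fst u + 1, snd u) \<in> \<Gamma>"
proof -
  have "adj u (fst u + 1, snd u)" by (simp add: adj_def)
  thus ?thesis using assms unfolding boundary_def by blast
qed

lemma dlt_funs: "q \<in> \<Gamma> \<Longrightarrow> dlt q \<in> funs_on \<Gamma>"
  by (auto simp: dlt_def funs_on_def)

lemma lap_dlt_u:
  assumes "q = (fst u + 1, snd u)" "q \<in> \<Gamma>" "u \<in> \<Gamma>"
  shows "lap \<Gamma> (dlt q) u = 1"
  using lap_nb[OF dlt_funs[OF assms(2)] assms(3)] assms(1) by (simp add: dlt_def prod_eq_iff)

lemma lap_dlt_v:
  assumes "q = (fst u + 1, snd u)" "q \<in> \<Gamma>" "v \<in> \<Gamma>" "fst v \<le> fst u" "v \<noteq> u"
  shows "lap \<Gamma> (dlt q) v = 0"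
  using lap_nb[OF dlt_funs[OF assms(2)] assms(3)] assms(1,4,5) by (auto simp: dlt_def prod_eq_iff)

lemma int_interior:
  assumes fin: "finite \<Gamma>" and t: "\<forall>v. t v \<in> \<int>"
  shows "S \<subseteq> \<Gamma> - boundary \<Gamma> \<Longrightarrow> \<exists>f\<in>int_funs_on \<Gamma>. \<forall>v\<in>S. lap \<Gamma> f v = t v"
proof (induction "card S" arbitrary: S rule: less_induct)
  case less
  show ?case
  proof (cases "S = {}")
    case True
    have "(\<lambda>_. 0) \<in> int_funs_on \<Gamma>" by (auto simp: int_funs_on_def funs_on_def)
    thus ?thesis using True by blast
  next
    case False
    have Sfin: "finite S" using less.prems fin finite_subset by blast
    define m where "m = Max (fst ` S)"
    have "m \<in> fst ` S" unfolding m_def using Sfin False by (intro Max_in) auto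
    then obtain u where u: "u \<in> S" "fst u = m" by auto
    have smax: "\<forall>v\<in>S. fst v \<le> fst u" using Sfin u by (auto simp: m_def)
    have "card (S - {u}) < card S" using u Sfin by (meson card_Diff1_less)
    moreover have "S - {u} \<subseteq> \<Gamma> - boundary \<Gamma>" using less.prems by auto
    ultimately obtain f' where f': "f' \<in> int_funs_on \<Gamma>" "\<forall>v\<in>S - {u}. lap \<Gamma> f' v = t v"
      using less.hyps by blast
    define q where "q = (fst u + 1, snd u)"
    have uI: "u \<in> \<Gamma> - boundary \<Gamma>" using less.prems u by auto
    have qG: "q \<in> \<Gamma>" unfolding q_def by (rule interior_nb[OF uI])
    define c where "c = t u - lap \<Gamma> f' u"
    have cZ: "c \<in> \<int>" unfolding c_def using t lap_int[OF f'(1), of u] by (intro Ints_diff) blast+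
    define f where "f = (\<lambda>w. f' w + c * dlt q w)"
    have fZ: "f \<in> int_funs_on \<Gamma>"
      unfolding int_funs_on_def funs_on_def
    proof (intro CollectI conjI allI impI)
      fix w assume "w \<notin> \<Gamma>"
      thus "f w = 0" using funs_onD[OF int_funs_onD2[OF f'(1)]] qG
        by (auto simp: f_def dlt_def)
    next
      fix w show "f w \<in> \<int>" using int_funs_onD[OF f'(1)] cZ
        by (auto simp: f_def dlt_def)
    qed
    have lapf: "lap \<Gamma> f v = lap \<Gamma> f' v + c * lap \<Gamma> (dlt q) v" for v
      unfolding f_def lap_add lap_scale[where c=c and f="dlt q"] by simp
    have "\<forall>v\<in>S. lap \<Gamma> f v = t v"
    proof
      fix v assume v: "v \<in> S"
      show "lap \<Gamma> f v = t v"
      proof (cases "v = u")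
        case True
        then show ?thesis using lapf lap_dlt_u[OF q_def qG] uI by (simp add: c_def)
      next
        case False
        have "v \<in> \<Gamma>" using v less.prems by auto
        then show ?thesis using lapf lap_dlt_v[OF q_def qG _ _ False] smax v f'(2) False by simp
      qed
    qed
    thus ?thesis using fZ by blast
  qed
qed

lemma fg_carrier[simp]: "carrier (fun_group A) = A" by (simp add: fun_group_def)
lemma fg_mult[simp]: "x \<otimes>\<^bsub>fun_group A\<^esub> y = (\<lambda>v. x v + y v)" by (simp add: fun_group_def)
lemma fg_one[simp]: "\<one>\<^bsub>fun_group A\<^esub> = (\<lambda>v. 0)" by (simp add: fun_group_def)

lemma fg_comm:
  assumes "(\<lambda>_. 0) \<in> A" "\<And>f g. f \<in> A \<Longrightarrow> g \<in> A \<Longrightarrow> (\<lambda>v. f v + g v) \<in> A"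
    "\<And>f. f \<in> A \<Longrightarrow> (\<lambda>v. - f v) \<in> A"
  shows "comm_group (fun_group A)"
proof (rule comm_groupI)
  fix x assume "x \<in> carrier (fun_group A)"
  then show "\<exists>y\<in>carrier (fun_group A). y \<otimes>\<^bsub>fun_group A\<^esub> x = \<one>\<^bsub>fun_group A\<^esub>"
    using assms(3) by (intro bexI[of _ "\<lambda>v. - x v"]) auto
qed (use assms in \<open>auto simp: algebra_simps\<close>)

lemma fg_inv:
  assumes "comm_group (fun_group A)" "f \<in> A" "(\<lambda>v. - f v) \<in> A"
  shows "inv\<^bsub>fun_group A\<^esub> f = (\<lambda>v. - f v)"
proof -
  interpret comm_group "fun_group A" by fact
  show ?thesis using assms(2,3) by (intro inv_equality) auto
qed

lemma fg_subgroup: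
  assumes "comm_group (fun_group A)" "B \<subseteq> A" "(\<lambda>_. 0) \<in> B"
    "\<And>f g. f \<in> B \<Longrightarrow> g \<in> B \<Longrightarrow> (\<lambda>v. f v + g v) \<in> B"
    "\<And>f. f \<in> B \<Longrightarrow> (\<lambda>v. - f v) \<in> B"
  shows "subgroup B (fun_group A)"
proof -
  interpret comm_group "fun_group A" by fact
  show ?thesis
  proof (rule subgroupI)
    fix a assume "a \<in> B"
    have "(\<lambda>v. - a v) \<in> B" using assms(5) \<open>a \<in> B\<close> .
    moreover have "inv\<^bsub>fun_group A\<^esub> a = (\<lambda>v. - a v)"
      using fg_inv[OF assms(1)] assms(2) calculation \<open>a \<in> B\<close> by blast
    ultimately show "inv\<^bsub>fun_group A\<^esub> a \<in> B" by simp
  qed (use assms in auto)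
qed

lemma lap_zero: "lap \<Gamma> (\<lambda>_. 0) = (\<lambda>_. 0)"
  by (simp add: lap_def fun_eq_iff)

lemma int_funs_closed:
  shows "(\<lambda>_. 0) \<in> int_funs_on \<Gamma>"
    and "f \<in> int_funs_on \<Gamma> \<Longrightarrow> g \<in> int_funs_on \<Gamma> \<Longrightarrow> (\<lambda>v. f v + g v) \<in> int_funs_on \<Gamma>"
    and "f \<in> int_funs_on \<Gamma> \<Longrightarrow> (\<lambda>v. - f v) \<in> int_funs_on \<Gamma>"
  by (auto simp: int_funs_on_def funs_on_def)

lemma hQ_closed:
  shows "(\<lambda>_. 0) \<in> harmonic_Q \<Gamma>"
    and "f \<in> harmonic_Q \<Gamma> \<Longrightarrow> g \<in> harmonic_Q \<Gamma> \<Longrightarrow> (\<lambda>v. f v + g v) \<in> harmonic_Q \<Gamma>"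
    and "f \<in> harmonic_Q \<Gamma> \<Longrightarrow> (\<lambda>v. - f v) \<in> harmonic_Q \<Gamma>"
  by (auto simp: harmonic_Q_def funs_on_def lap_zero lap_add lap_neg)

lemma hG_closed:
  shows "(\<lambda>_. 0) \<in> harmonic_G_carrier \<Gamma>"
    and "f \<in> harmonic_G_carrier \<Gamma> \<Longrightarrow> g \<in> harmonic_G_carrier \<Gamma> \<Longrightarrow> (\<lambda>v. f v + g v) \<in> harmonic_G_carrier \<Gamma>"
    and "f \<in> harmonic_G_carrier \<Gamma> \<Longrightarrow> (\<lambda>v. - f v) \<in> harmonic_G_carrier \<Gamma>"
  using hQ_closed[where \<Gamma>=\<Gamma>] by (auto simp: harmonic_G_carrier_def lap_zero lap_add lap_neg)

theorem lemma1:
  fixes \<Gamma> :: "(int \<times> int) set"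
  assumes "finite \<Gamma>" and "convex_domain \<Gamma>"
  shows "(\<forall>H \<in> harmonic_G_carrier \<Gamma>. (\<lambda>v. - lap \<Gamma> H v) \<in> int_funs_on \<Gamma>) \<and>
    (\<exists>\<phi>. \<phi> \<in> iso (harmonic_G \<Gamma>) (sandpile_group \<Gamma>) \<and>
      (\<forall>H \<in> harmonic_G_carrier \<Gamma>.
         \<phi> (harmonic_Z \<Gamma> #>\<^bsub>fun_group (harmonic_G_carrier \<Gamma>)\<^esub> H) =
         (lap \<Gamma> ` int_funs_on \<Gamma>) #>\<^bsub>fun_group (int_funs_on \<Gamma>)\<^esub> (\<lambda>v. - lap \<Gamma> H v)))"
proof -
  note fin = assms(1)
  define FG where "FG = fun_group (harmonic_G_carrier \<Gamma>)"
  define FZ where "FZ = fun_group (int_funs_on \<Gamma>)"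
  define L where "L = lap \<Gamma> ` int_funs_on \<Gamma>"
  define HZ where "HZ = harmonic_Z \<Gamma>"
  have SG: "sandpile_group \<Gamma> = FZ Mod L" by (simp add: sandpile_group_def FZ_def L_def)
  have part1: "(\<lambda>v. - lap \<Gamma> H v) \<in> int_funs_on \<Gamma>" if H: "H \<in> harmonic_G_carrier \<Gamma>" for H
  proof -
    have "- lap \<Gamma> H v \<in> \<int>" for v
    proof (cases "v \<in> boundary \<Gamma>")
      case True thus ?thesis using H by (auto simp: harmonic_G_carrier_def)
    next
      case False
      thus ?thesis using H lap_out[of v \<Gamma> H]
        by (cases "v \<in> \<Gamma>") (auto simp: harmonic_G_carrier_def harmonic_Q_def)
    qed
    thus ?thesis using lap_out unfolding int_funs_on_def funs_on_def by auto
  qed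
  have cgG: "comm_group FG" unfolding FG_def by (rule fg_comm) (auto intro: hG_closed)
  have cgZ: "comm_group FZ" unfolding FZ_def by (rule fg_comm) (auto intro: int_funs_closed)
  interpret G: comm_group FG by (rule cgG)
  interpret Z: comm_group FZ by (rule cgZ)
  have subL: "subgroup L FZ" unfolding FZ_def
  proof (rule fg_subgroup)
    show "comm_group (fun_group (int_funs_on \<Gamma>))" using cgZ by (simp add: FZ_def)
    show "L \<subseteq> int_funs_on \<Gamma>" using lap_int_funs by (auto simp: L_def)
    show "(\<lambda>_. 0) \<in> L" unfolding L_def
      by (rule image_eqI[where x="\<lambda>_. 0"]) (simp_all add: lap_zero int_funs_closed(1))
    fix f g assume "f \<in> L" "g \<in> L"
    then obtain f0 g0 where "f0 \<in> int_funs_on \<Gamma>" "g0 \<in> int_funs_on \<Gamma>" "f = lap \<Gamma> f0" "g = lap \<Gamma> g0"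
      by (auto simp: L_def)
    hence "(\<lambda>v. f v + g v) = lap \<Gamma> (\<lambda>v. f0 v + g0 v)" "(\<lambda>v. f0 v + g0 v) \<in> int_funs_on \<Gamma>"
      by (simp_all add: lap_add int_funs_closed(2))
    thus "(\<lambda>v. f v + g v) \<in> L" unfolding L_def by (rule image_eqI)
  next
    fix f assume "f \<in> L"
    then obtain f0 where "f0 \<in> int_funs_on \<Gamma>" "f = lap \<Gamma> f0" by (auto simp: L_def)
    hence "(\<lambda>v. - f v) = lap \<Gamma> (\<lambda>v. - f0 v)" "(\<lambda>v. - f0 v) \<in> int_funs_on \<Gamma>"
      by (simp_all add: lap_neg int_funs_closed(3))
    thus "(\<lambda>v. - f v) \<in> L" unfolding L_def by (rule image_eqI)
  qed
  have nL: "L \<lhd> FZ" by (rule Z.subgroup_imp_normal[OF subL])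
  interpret N: normal L FZ by (rule nL)
  have grpS: "group (FZ Mod L)" by (rule N.factorgroup_is_group)
  define h where "h H = L #>\<^bsub>FZ\<^esub> (\<lambda>v. - lap \<Gamma> H v)" for H
  have hc: "h H \<in> carrier (FZ Mod L)" if "H \<in> carrier FG" for H
    using part1[of H] that unfolding h_def carrier_FactGroup by (auto simp: FG_def FZ_def)
  have hom: "h \<in> hom FG (FZ Mod L)"
  proof (rule homI)
    fix x y assume x: "x \<in> carrier FG" and y: "y \<in> carrier FG"
    have "h (x \<otimes>\<^bsub>FG\<^esub> y) = L #>\<^bsub>FZ\<^esub> ((\<lambda>v. - lap \<Gamma> x v) \<otimes>\<^bsub>FZ\<^esub> (\<lambda>v. - lap \<Gamma> y v))"
      by (simp add: h_def FG_def FZ_def lap_add)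
    also have "\<dots> = h x <#>\<^bsub>FZ\<^esub> h y" unfolding h_def
      using part1 x y by (intro N.rcos_sum[symmetric]) (auto simp: FG_def FZ_def)
    finally show "h (x \<otimes>\<^bsub>FG\<^esub> y) = h x \<otimes>\<^bsub>FZ Mod L\<^esub> h y" by simp
  qed (rule hc)
  have gh: "group_hom FG (FZ Mod L) h"
    unfolding group_hom_def group_hom_axioms_def using G.is_group grpS hom by blast
  interpret GH: group_hom FG "FZ Mod L" h by (rule gh)
  have HZsub: "HZ \<subseteq> harmonic_G_carrier \<Gamma>"
    using lap_int by (auto simp: HZ_def harmonic_Z_def harmonic_G_carrier_def)
  have ker: "kernel FG (FZ Mod L) h = HZ"
  proof -
    have "h x = L \<longleftrightarrow> x \<in> HZ" if x: "x \<in> harmonic_G_carrier \<Gamma>" for x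
    proof -
      have gx: "(\<lambda>v. - lap \<Gamma> x v) \<in> carrier FZ" using part1[OF x] by (simp add: FZ_def)
      have "h x = L \<longleftrightarrow> (\<lambda>v. - lap \<Gamma> x v) \<in> L"
      proof
        assume "h x = L"
        thus "(\<lambda>v. - lap \<Gamma> x v) \<in> L" using Z.rcos_self[OF gx subL] by (simp add: h_def)
      next
        assume "(\<lambda>v. - lap \<Gamma> x v) \<in> L"
        thus "h x = L" unfolding h_def by (rule subgroup.rcos_const[OF subL Z.is_group])
      qed
      also have "\<dots> \<longleftrightarrow> x \<in> HZ"
      proof
        assume "(\<lambda>v. - lap \<Gamma> x v) \<in> L"
        then obtain f where f: "f \<in> int_funs_on \<Gamma>" "(\<lambda>v. - lap \<Gamma> x v) = lap \<Gamma> f"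
          by (auto simp: L_def)
        have xf: "x \<in> funs_on \<Gamma>" using x by (auto simp: harmonic_G_carrier_def harmonic_Q_def)
        have s: "(\<lambda>v. x v + f v) \<in> funs_on \<Gamma>"
          using funs_onD[OF xf] funs_onD[OF int_funs_onD2[OF f(1)]] by (auto simp: funs_on_def)
        have "\<forall>v\<in>\<Gamma>. lap \<Gamma> (\<lambda>v. x v + f v) v = 0"
          using fun_cong[OF f(2), symmetric] by (simp add: lap_add)
        from lap_inj0[OF fin s this] have "\<forall>v. x v = - f v" by (auto simp: fun_eq_iff add_eq_0_iff)
        hence "\<forall>v. x v \<in> \<int>" using int_funs_onD[OF f(1)] by simp
        thus "x \<in> HZ" using x xf
          by (auto simp: HZ_def harmonic_Z_def harmonic_G_carrier_def int_funs_on_def)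
      next
        assume "x \<in> HZ"
        hence "(\<lambda>v. - x v) \<in> int_funs_on \<Gamma>"
          by (auto simp: HZ_def harmonic_Z_def intro: int_funs_closed(3))
        hence "lap \<Gamma> (\<lambda>v. - x v) \<in> lap \<Gamma> ` int_funs_on \<Gamma>" by (rule imageI)
        thus "(\<lambda>v. - lap \<Gamma> x v) \<in> L" unfolding L_def by (simp add: lap_neg)
      qed
      finally show ?thesis .
    qed
    thus ?thesis using HZsub unfolding kernel_def by (auto simp: FG_def)
  qed
  have surj: "h ` carrier FG = carrier (FZ Mod L)"
  proof
    show "h ` carrier FG \<subseteq> carrier (FZ Mod L)" using hc by auto
  next
    show "carrier (FZ Mod L) \<subseteq> h ` carrier FG"
    proof
      fix Y0 assume "Y0 \<in> carrier (FZ Mod L)"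
      then obtain g where g: "g \<in> int_funs_on \<Gamma>" "Y0 = L #>\<^bsub>FZ\<^esub> g"
        unfolding carrier_FactGroup by (auto simp: FZ_def)
      have "\<forall>v. - g v \<in> \<int>" using int_funs_onD[OF g(1)] by simp
      from int_interior[OF fin this order.refl] obtain f where
        f: "f \<in> int_funs_on \<Gamma>" "\<forall>v\<in>\<Gamma> - boundary \<Gamma>. lap \<Gamma> f v = - g v" by blast
      define b where "b = (\<lambda>v. - (g v + lap \<Gamma> f v))"
      have bZ: "b \<in> int_funs_on \<Gamma>" unfolding b_def
        by (intro int_funs_closed(2,3) g(1) lap_int_funs f(1))
      obtain H where H: "H \<in> funs_on \<Gamma>" "lap \<Gamma> H = b"
        using lap_surj[OF fin int_funs_onD2[OF bZ]] by blast
      have HG: "H \<in> carrier FG"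
        using H f(2) int_funs_onD[OF bZ] by (auto simp: FG_def harmonic_G_carrier_def harmonic_Q_def b_def)
      have lfZ: "lap \<Gamma> f \<in> carrier FZ" using lap_int_funs[OF f(1)] by (simp add: FZ_def)
      have gZ: "g \<in> carrier FZ" using g by (simp add: FZ_def)
      have "h H = L #>\<^bsub>FZ\<^esub> (lap \<Gamma> f \<otimes>\<^bsub>FZ\<^esub> g)"
        unfolding h_def H(2) b_def by (simp add: FZ_def add.commute)
      also have "\<dots> = (L #>\<^bsub>FZ\<^esub> lap \<Gamma> f) #>\<^bsub>FZ\<^esub> g"
        using Z.coset_mult_assoc[OF subgroup.subset[OF subL] lfZ gZ] by simp
      also have "L #>\<^bsub>FZ\<^esub> lap \<Gamma> f = L"
        using f(1) by (intro subgroup.rcos_const[OF subL Z.is_group]) (auto simp: L_def)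
      finally have "h H = Y0" using g by simp
      thus "Y0 \<in> h ` carrier FG" using HG by blast
    qed
  qed
  have iso: "(\<lambda>Y0. the_elem (h ` Y0)) \<in> iso (FG Mod HZ) (FZ Mod L)"
    using GH.FactGroup_iso_set[OF surj] ker by simp
  have val: "the_elem (h ` (HZ #>\<^bsub>FG\<^esub> H)) = h H" if H: "H \<in> harmonic_G_carrier \<Gamma>" for H
  proof -
    have HG: "H \<in> carrier FG" using H by (simp add: FG_def)
    have "h ` (HZ #>\<^bsub>FG\<^esub> H) = {h H}"
    proof
      show "h ` (HZ #>\<^bsub>FG\<^esub> H) \<subseteq> {h H}"
      proof
        fix y assume "y \<in> h ` (HZ #>\<^bsub>FG\<^esub> H)"
        then obtain k where k: "k \<in> HZ" "y = h (k \<otimes>\<^bsub>FG\<^esub> H)" unfolding r_coset_def by auto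
        have kG: "k \<in> carrier FG" and hk: "h k = \<one>\<^bsub>FZ Mod L\<^esub>"
          using k(1) ker unfolding kernel_def by blast+
        have "y = h k \<otimes>\<^bsub>FZ Mod L\<^esub> h H" using k(2) kG HG by simp
        also have "\<dots> = h H" using hk GH.H.l_one hc[OF HG] by simp
        finally show "y \<in> {h H}" by simp
      qed
    next
      have "(\<lambda>_. 0) \<in> HZ" using hQ_closed(1) int_funs_closed(1) by (auto simp: HZ_def harmonic_Z_def)
      hence "(\<lambda>_. 0) \<otimes>\<^bsub>FG\<^esub> H \<in> HZ #>\<^bsub>FG\<^esub> H" unfolding r_coset_def by auto
      moreover have "(\<lambda>_. 0) \<otimes>\<^bsub>FG\<^esub> H = H" by (simp add: FG_def)
      ultimately show "{h H} \<subseteq> h ` (HZ #>\<^bsub>FG\<^esub> H)" by auto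
    qed
    thus ?thesis by simp
  qed
  show ?thesis
  proof (intro conjI ballI exI[of _ "\<lambda>Y0. the_elem (h ` Y0)"])
    show "\<And>H. H \<in> harmonic_G_carrier \<Gamma> \<Longrightarrow> (\<lambda>v. - lap \<Gamma> H v) \<in> int_funs_on \<Gamma>" by (rule part1)
    show "(\<lambda>Y0. the_elem (h ` Y0)) \<in> iso (harmonic_G \<Gamma>) (sandpile_group \<Gamma>)"
      using iso by (simp add: harmonic_G_def SG FG_def HZ_def)
    fix H assume "H \<in> harmonic_G_carrier \<Gamma>"
    thus "the_elem (h ` (harmonic_Z \<Gamma> #>\<^bsub>fun_group (harmonic_G_carrier \<Gamma>)\<^esub> H)) =
         (lap \<Gamma> ` int_funs_on \<Gamma>) #>\<^bsub>fun_group (int_funs_on \<Gamma>)\<^esub> (\<lambda>v. - lap \<Gamma> H v)"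
      using val by (simp add: h_def HZ_def FG_def L_def FZ_def)
  qed
qed

end
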